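(* Let $\Omega\subset\mathbb R^2$ be a smooth, bounded domain, $d_i,\chi,\lambda_i,\mu_i,a_i,b_i>0$ ($i\in\{1,2,3\}$), $0\le u_0,v_0\in\bigcup_{\theta>2}W^{1,\theta}(\Omega)$, $0\le w_0\in C^0(\overline\Omega)$, and let $(u,v,w)$ be the nonnegative, unique maximal classical solution on $\overline\Omega\times[0,T_{\max})$, $T_{\max}\in(0,\infty]$, of $$\begin{cases} u_t = d_1 \Delta u + u(\lambda_1 - \mu_1 u - a_1 v - a_2 w),\\ v_t = d_2 \Delta v + v(\lambda_2 - \mu_2 v + b_1 u - a_3 w),\\ w_t = d_3 \Delta w - \chi \nabla\cdot(w \nabla(uv)) + w(\lambda_3 - \mu_3 w + b_2 u + b_3 v) & \text{in } \Omega\times(0,T_{\max}),\\ \partial_\nu u = \partial_\nu v = \partial_\nu w = 0 & \text{on } \partial\Omega\times(0,T_{\max}),\\ u(\cdot,0)=u_0,\ v(\cdot,0)=v_0,\ w(\cdot,0)=w_0. \end{cases}$$ Then there is $C>0$ such that $\|u\|_{L^\infty(\Omega\times(0,T_{\max}))}\le C$ and $\|v\|_{L^\infty(\Omega\times(0,T_{\max}))}\le C$.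
   Context: The maximal classical solution belongs to $(C^{2,1}(\overline\Omega\times[0,T_{\max})))^3\cap C^0([0,T_{\max});W^{1,\theta}(\Omega)\times W^{1,\theta}(\Omega)\times C^0(\overline\Omega))$ for some $\theta>2$; its existence and uniqueness is established in the paper. $\nu$ is the outward unit normal. *)

theory Defs
  imports "HOL-Analysis.Analysis"
begin

type_synonym pt = "real^2"

definition has_pd :: "2 \<Rightarrow> (pt \<Rightarrow> real) \<Rightarrow> pt \<Rightarrow> bool" where
  "has_pd i f x \<longleftrightarrow> (\<lambda>s. f (x + s *\<^sub>R axis i 1)) differentiable (at 0)"

definition pd :: "2 \<Rightarrow> (pt \<Rightarrow> real) \<Rightarrow> pt \<Rightarrow> real" where
  "pd i f x = deriv (\<lambda>s. f (x + s *\<^sub>R axis i 1)) 0"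

definition grad :: "(pt \<Rightarrow> real) \<Rightarrow> pt \<Rightarrow> pt" where
  "grad f x = (\<chi> i. pd i f x)"

definition lap :: "(pt \<Rightarrow> real) \<Rightarrow> pt \<Rightarrow> real" where
  "lap f x = (\<Sum>i\<in>UNIV. pd i (pd i f) x)"

definition divg :: "(pt \<Rightarrow> pt) \<Rightarrow> pt \<Rightarrow> real" where
  "divg F x = (\<Sum>i\<in>UNIV. pd i (\<lambda>y. F y $ i) x)"

fun Ck :: "nat \<Rightarrow> (pt \<Rightarrow> real) \<Rightarrow> bool" where
  "Ck 0 f = continuous_on UNIV f"
| "Ck (Suc k) f = (continuous_on UNIV f \<and> (\<forall>i x. has_pd i f x) \<and> (\<forall>i. Ck k (pd i f)))"

definition smooth :: "(pt \<Rightarrow> real) \<Rightarrow> bool" where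
  "smooth f \<longleftrightarrow> (\<forall>k. Ck k f)"

definition smooth_bounded_domain :: "pt set \<Rightarrow> (pt \<Rightarrow> real) \<Rightarrow> bool" where
  "smooth_bounded_domain \<Omega> \<phi> \<longleftrightarrow> open \<Omega> \<and> connected \<Omega> \<and> \<Omega> \<noteq> {} \<and> bounded \<Omega> \<and>
     smooth \<phi> \<and> \<Omega> = {x. \<phi> x < 0} \<and> frontier \<Omega> = {x. \<phi> x = 0} \<and>
     (\<forall>x\<in>frontier \<Omega>. grad \<phi> x \<noteq> 0)"

definition normal :: "(pt \<Rightarrow> real) \<Rightarrow> pt \<Rightarrow> pt" where
  "normal \<phi> x = grad \<phi> x /\<^sub>R norm (grad \<phi> x)"

definition test_fn :: "pt set \<Rightarrow> (pt \<Rightarrow> real) \<Rightarrow> bool" where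
  "test_fn \<Omega> \<psi> \<longleftrightarrow> smooth \<psi> \<and> compact (closure {x. \<psi> x \<noteq> 0}) \<and> closure {x. \<psi> x \<noteq> 0} \<subseteq> \<Omega>"

definition weak_grad :: "pt set \<Rightarrow> real \<Rightarrow> (pt \<Rightarrow> real) \<Rightarrow> (pt \<Rightarrow> pt) \<Rightarrow> bool" where
  "weak_grad \<Omega> \<theta> f g \<longleftrightarrow>
     set_borel_measurable lborel \<Omega> f \<and> set_borel_measurable lborel \<Omega> g \<and>
     set_integrable lborel \<Omega> (\<lambda>x. \<bar>f x\<bar> powr \<theta>) \<and>
     set_integrable lborel \<Omega> (\<lambda>x. norm (g x) powr \<theta>) \<and>
     (\<forall>\<psi>. test_fn \<Omega> \<psi> \<longrightarrow> (\<forall>i.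
        set_integrable lborel \<Omega> (\<lambda>x. f x * pd i \<psi> x) \<and>
        set_integrable lborel \<Omega> (\<lambda>x. g x $ i * \<psi> x) \<and>
        (LINT x:\<Omega>|lborel. f x * pd i \<psi> x) = - (LINT x:\<Omega>|lborel. g x $ i * \<psi> x)))"

definition W1 :: "pt set \<Rightarrow> real \<Rightarrow> (pt \<Rightarrow> real) \<Rightarrow> bool" where
  "W1 \<Omega> \<theta> f \<longleftrightarrow> (\<exists>g. weak_grad \<Omega> \<theta> f g)"

definition tint :: "ereal \<Rightarrow> real set" where
  "tint T = {t. 0 < t \<and> ereal t < T}"

definition tint0 :: "ereal \<Rightarrow> real set" where
  "tint0 T = {t. 0 \<le> t \<and> ereal t < T}"

definition cont_ext :: "('a::topological_space) set \<Rightarrow> 'a set \<Rightarrow> ('a \<Rightarrow> real) \<Rightarrow> bool" where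
  "cont_ext S A F \<longleftrightarrow> continuous_on A F \<and> (\<forall>p\<in>S. \<exists>l. (F \<longlongrightarrow> l) (at p within A))"

definition C21 :: "pt set \<Rightarrow> ereal \<Rightarrow> (pt \<Rightarrow> real \<Rightarrow> real) \<Rightarrow> bool" where
  "C21 \<Omega> T u \<longleftrightarrow>
     continuous_on (closure \<Omega> \<times> tint0 T) (\<lambda>(x,t). u x t) \<and>
     (\<forall>x\<in>\<Omega>. \<forall>t\<in>tint T. (\<lambda>s. u x s) differentiable (at t) \<and>
        (\<forall>i. has_pd i (\<lambda>y. u y t) x \<and> (\<forall>j. has_pd j (pd i (\<lambda>y. u y t)) x))) \<and>
     cont_ext (closure \<Omega> \<times> tint T) (\<Omega> \<times> tint T) (\<lambda>(x,t). deriv (\<lambda>s. u x s) t) \<and>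
     (\<forall>i. cont_ext (closure \<Omega> \<times> tint T) (\<Omega> \<times> tint T) (\<lambda>(x,t). pd i (\<lambda>y. u y t) x)) \<and>
     (\<forall>i j. cont_ext (closure \<Omega> \<times> tint T) (\<Omega> \<times> tint T) (\<lambda>(x,t). pd j (pd i (\<lambda>y. u y t)) x))"

definition W1cont :: "pt set \<Rightarrow> real \<Rightarrow> ereal \<Rightarrow> (pt \<Rightarrow> real \<Rightarrow> real) \<Rightarrow> bool" where
  "W1cont \<Omega> \<theta> T u \<longleftrightarrow> (\<exists>G. (\<forall>t\<in>tint0 T. weak_grad \<Omega> \<theta> (\<lambda>x. u x t) (G t)) \<and>
     (\<forall>t0\<in>tint0 T. ((\<lambda>t. (LINT x:\<Omega>|lborel. \<bar>u x t - u x t0\<bar> powr \<theta>)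
                        + (LINT x:\<Omega>|lborel. norm (G t x - G t0 x) powr \<theta>)) \<longlongrightarrow> 0)
                   (at t0 within tint0 T)))"

definition classical_solution ::
  "pt set \<Rightarrow> (pt \<Rightarrow> real) \<Rightarrow> (nat \<Rightarrow> real) \<Rightarrow> real \<Rightarrow> (nat \<Rightarrow> real) \<Rightarrow> (nat \<Rightarrow> real) \<Rightarrow>
   (nat \<Rightarrow> real) \<Rightarrow> (nat \<Rightarrow> real) \<Rightarrow> (pt \<Rightarrow> real) \<Rightarrow> (pt \<Rightarrow> real) \<Rightarrow> (pt \<Rightarrow> real) \<Rightarrow>
   ereal \<Rightarrow> (pt \<Rightarrow> real \<Rightarrow> real) \<Rightarrow> (pt \<Rightarrow> real \<Rightarrow> real) \<Rightarrow> (pt \<Rightarrow> real \<Rightarrow> real) \<Rightarrow> bool" where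
  "classical_solution \<Omega> \<phi> d chi lam mu a b u0 v0 w0 T u v w \<longleftrightarrow>
     0 < T \<and> C21 \<Omega> T u \<and> C21 \<Omega> T v \<and> C21 \<Omega> T w \<and>
     (\<exists>\<theta>>2. W1cont \<Omega> \<theta> T u \<and> W1cont \<Omega> \<theta> T v) \<and>
     (\<forall>x\<in>\<Omega>. \<forall>t\<in>tint T.
        (\<forall>i. has_pd i (\<lambda>y. w y t * pd i (\<lambda>z. u z t * v z t) y) x) \<and>
        deriv (\<lambda>s. u x s) t = d 1 * lap (\<lambda>y. u y t) x
           + u x t * (lam 1 - mu 1 * u x t - a 1 * v x t - a 2 * w x t) \<and>
        deriv (\<lambda>s. v x s) t = d 2 * lap (\<lambda>y. v y t) x
           + v x t * (lam 2 - mu 2 * v x t + b 1 * u x t - a 3 * w x t) \<and>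
        deriv (\<lambda>s. w x s) t = d 3 * lap (\<lambda>y. w y t) x
           - chi * divg (\<lambda>y. w y t *\<^sub>R grad (\<lambda>z. u z t * v z t) y) x
           + w x t * (lam 3 - mu 3 * w x t + b 2 * u x t + b 3 * v x t)) \<and>
     (\<forall>x\<in>frontier \<Omega>. \<forall>t\<in>tint T.
        ((\<lambda>(y,s). grad (\<lambda>z. u z s) y \<bullet> normal \<phi> x) \<longlongrightarrow> 0) (at (x,t) within \<Omega> \<times> tint T) \<and>
        ((\<lambda>(y,s). grad (\<lambda>z. v z s) y \<bullet> normal \<phi> x) \<longlongrightarrow> 0) (at (x,t) within \<Omega> \<times> tint T) \<and>
        ((\<lambda>(y,s). grad (\<lambda>z. w z s) y \<bullet> normal \<phi> x) \<longlongrightarrow> 0) (at (x,t) within \<Omega> \<times> tint T)) \<and>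
     (AE x in lborel. x \<in> \<Omega> \<longrightarrow> u x 0 = u0 x) \<and>
     (AE x in lborel. x \<in> \<Omega> \<longrightarrow> v x 0 = v0 x) \<and>
     (\<forall>x\<in>closure \<Omega>. w x 0 = w0 x)"

definition maximal_solution ::
  "pt set \<Rightarrow> (pt \<Rightarrow> real) \<Rightarrow> (nat \<Rightarrow> real) \<Rightarrow> real \<Rightarrow> (nat \<Rightarrow> real) \<Rightarrow> (nat \<Rightarrow> real) \<Rightarrow>
   (nat \<Rightarrow> real) \<Rightarrow> (nat \<Rightarrow> real) \<Rightarrow> (pt \<Rightarrow> real) \<Rightarrow> (pt \<Rightarrow> real) \<Rightarrow> (pt \<Rightarrow> real) \<Rightarrow>
   ereal \<Rightarrow> (pt \<Rightarrow> real \<Rightarrow> real) \<Rightarrow> (pt \<Rightarrow> real \<Rightarrow> real) \<Rightarrow> (pt \<Rightarrow> real \<Rightarrow> real) \<Rightarrow> bool" where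
  "maximal_solution \<Omega> \<phi> d chi lam mu a b u0 v0 w0 T u v w \<longleftrightarrow>
     classical_solution \<Omega> \<phi> d chi lam mu a b u0 v0 w0 T u v w \<and>
     \<not> (\<exists>T' u' v' w'. T < T' \<and> classical_solution \<Omega> \<phi> d chi lam mu a b u0 v0 w0 T' u' v' w' \<and>
         (\<forall>x\<in>closure \<Omega>. \<forall>t\<in>tint0 T. u' x t = u x t \<and> v' x t = v x t \<and> w' x t = w x t))"

end

theory Submission
  imports Defs
begin

lemma pd_deriv:
  "has_pd i f x \<Longrightarrow> ((\<lambda>s. f (x + s *\<^sub>R axis i 1)) has_real_derivative pd i f x) (at 0)"
  unfolding has_pd_def pd_def by (simp add: DERIV_deriv_iff_real_differentiable)

lemma pd_deriv_shift:
  assumes "has_pd i f (x + s0 *\<^sub>R axis i 1)"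
  shows "((\<lambda>s. f (x + s *\<^sub>R axis i 1)) has_real_derivative pd i f (x + s0 *\<^sub>R axis i 1)) (at s0)"
proof -
  have "((\<lambda>r. f (x + (r + s0) *\<^sub>R axis i 1)) has_real_derivative pd i f (x + s0 *\<^sub>R axis i 1)) (at 0)"
    using pd_deriv[OF assms] by (simp add: scaleR_add_left algebra_simps)
  then show ?thesis using DERIV_shift[of "\<lambda>s. f (x + s *\<^sub>R axis i 1)" _ 0 s0] by simp
qed

lemma vec2_decomp: "(h::real^2) = h$1 *\<^sub>R axis 1 1 + h$2 *\<^sub>R axis 2 1"
  by (simp add: vec_eq_iff forall_2 axis_def)

lemma grad_inner: "grad f x \<bullet> h = pd 1 f x * h$1 + pd 2 f x * h$2"
  by (simp add: grad_def inner_vec_def sum_2)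

lemma norm_axis_scale: "norm (a *\<^sub>R axis i (1::real) :: real^2) = \<bar>a\<bar>"
  by simp

lemma C1_has_derivative:
  fixes f :: "real^2 \<Rightarrow> real"
  assumes S: "open S" "x \<in> S" and hp: "\<forall>y\<in>S. \<forall>i. has_pd i f y"
    and cont: "\<forall>i. continuous_on S (pd i f)"
  shows "(f has_derivative (\<lambda>h. grad f x \<bullet> h)) (at x)"
  unfolding has_derivative_at_alt
proof (intro conjI allI impI)
  show "bounded_linear (\<lambda>h. grad f x \<bullet> h)" by (rule bounded_linear_inner_right)
  fix e :: real assume e: "e > 0"
  define e1 where "e1 = (axis 1 1 :: real^2)"
  define e2 where "e2 = (axis 2 1 :: real^2)"
  have "isCont (pd 1 f) x" using cont S by (simp add: continuous_on_eq_continuous_at)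
  then obtain d1 where d1: "d1 > 0" "\<forall>y. dist y x < d1 \<longrightarrow> dist (pd 1 f y) (pd 1 f x) < e/2"
    using e unfolding continuous_at_eps_delta by (meson half_gt_zero)
  obtain d1' where d1': "d1' > 0" "ball x d1' \<subseteq> S" using S openE by blast
  have "((\<lambda>s. f (x + s *\<^sub>R e2)) has_real_derivative pd 2 f x) (at 0)"
    using pd_deriv hp S unfolding e2_def by blast
  then have "((\<lambda>s. (f (x + s *\<^sub>R e2) - f (x + 0 *\<^sub>R e2)) / (s - 0)) \<longlongrightarrow> pd 2 f x) (at 0)"
    using has_field_derivative_iff[of _ _ 0 UNIV] by (simp del: scaleR_zero_left) (simp add: has_field_derivative_iff)
  then obtain d2 where d2: "d2 > 0" "\<forall>s. s \<noteq> 0 \<and> norm (s - 0) < d2 \<longrightarrow>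
      norm ((f (x + s *\<^sub>R e2) - f (x + 0 *\<^sub>R e2)) / (s - 0) - pd 2 f x) < e/2"
    using e unfolding LIM_eq by (meson half_gt_zero)
  have g2: "\<bar>f (x + s *\<^sub>R e2) - f x - pd 2 f x * s\<bar> \<le> e/2 * \<bar>s\<bar>" if "\<bar>s\<bar> < d2" for s
  proof (cases "s = 0")
    case True then show ?thesis by simp
  next
    case False
    then have "\<bar>(f (x + s *\<^sub>R e2) - f x) / s - pd 2 f x\<bar> < e/2" using d2 that by auto
    then have "\<bar>((f (x + s *\<^sub>R e2) - f x) / s - pd 2 f x) * s\<bar> \<le> e/2 * \<bar>s\<bar>"
      by (metis abs_ge_zero abs_mult less_imp_le mult_right_mono)
    moreover have "((f (x + s *\<^sub>R e2) - f x) / s - pd 2 f x) * s = f (x + s *\<^sub>R e2) - f x - pd 2 f x * s"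
      using False by (simp add: field_simps)
    ultimately show ?thesis by simp
  qed
  define d where "d = min (min d1 d1') d2 / 2"
  have d: "d > 0" using d1 d1' d2 by (simp add: d_def)
  show "\<exists>d>0. \<forall>y. norm (y - x) < d \<longrightarrow> norm (f y - f x - grad f x \<bullet> (y - x)) \<le> e * norm (y - x)"
  proof (intro exI[of _ d] conjI allI impI d)
    fix y assume y: "norm (y - x) < d"
    define h where "h = y - x"
    define a where "a = h$1"
    define b where "b = h$2"
    have ha: "\<bar>a\<bar> \<le> norm h" unfolding a_def by (rule component_le_norm_cart)
    have hb: "\<bar>b\<bar> \<le> norm h" unfolding b_def by (rule component_le_norm_cart)
    have yx: "y = x + b *\<^sub>R e2 + a *\<^sub>R e1"
      using vec2_decomp[of h] unfolding h_def a_def b_def e1_def e2_def by (simp add: algebra_simps)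
    define p where "p s = x + b *\<^sub>R e2 + s *\<^sub>R e1" for s
    define \<psi> where "\<psi> s = f (p s) - s * pd 1 f x" for s
    have pclose: "dist (p s) x < min d1 d1'" if "s \<in> closed_segment 0 a" for s
    proof -
      have "\<bar>s\<bar> \<le> \<bar>a\<bar>" using that by (auto simp: closed_segment_eq_real_ivl split: if_splits)
      have "dist (p s) x = norm (b *\<^sub>R e2 + s *\<^sub>R e1)" by (simp add: p_def dist_norm)
      also have "\<dots> \<le> \<bar>b\<bar> + \<bar>s\<bar>"
        by (metis e1_def e2_def norm_axis_scale norm_triangle_ineq)
      also have "\<dots> \<le> 2 * norm h" using ha hb \<open>\<bar>s\<bar> \<le> \<bar>a\<bar>\<close> by simp
      also have "\<dots> < min d1 d1'" using y unfolding h_def d_def by linarith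
      finally show ?thesis .
    qed
    have der: "(\<psi> has_real_derivative (pd 1 f (p s) - pd 1 f x)) (at s within closed_segment 0 a)"
      if "s \<in> closed_segment 0 a" for s
    proof -
      have "p s \<in> S" using pclose[OF that] d1' by (auto simp: dist_commute)
      then have "has_pd 1 f ((x + b *\<^sub>R e2) + s *\<^sub>R e1)" using hp by (simp add: p_def)
      from pd_deriv_shift[OF this[unfolded e1_def]]
      have "((\<lambda>s. f (p s)) has_real_derivative pd 1 f (p s)) (at s)"
        by (simp add: p_def e1_def)
      then have "(\<psi> has_real_derivative (pd 1 f (p s) - pd 1 f x)) (at s)"
        unfolding \<psi>_def by (auto intro!: derivative_eq_intros)
      then show ?thesis by (rule has_field_derivative_at_within)
    qed
    have bnd: "norm (pd 1 f (p s) - pd 1 f x) \<le> e/2" if "s \<in> closed_segment 0 a" for s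
      using d1 pclose[OF that] by (simp add: dist_norm) (meson less_imp_le)
    have "norm (\<psi> a - \<psi> 0) \<le> e/2 * norm (a - 0)"
      by (rule field_differentiable_bound[OF convex_closed_segment der bnd]) auto
    then have A: "\<bar>f y - f (x + b *\<^sub>R e2) - a * pd 1 f x\<bar> \<le> e/2 * \<bar>a\<bar>"
      by (simp add: \<psi>_def p_def yx algebra_simps)
    have B: "\<bar>f (x + b *\<^sub>R e2) - f x - pd 2 f x * b\<bar> \<le> e/2 * \<bar>b\<bar>"
    proof - have "\<bar>b\<bar> < d2" using hb y d_def h_def d1 d1' d2 by simp then show ?thesis using g2 by blast qed
    have gi: "grad f x \<bullet> (y - x) = pd 1 f x * a + pd 2 f x * b"
      by (simp add: grad_inner a_def b_def h_def)
    have "\<bar>f y - f x - grad f x \<bullet> (y - x)\<bar> \<le> e/2 * \<bar>a\<bar> + e/2 * \<bar>b\<bar>"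
    proof -
      have eq: "f y - f x - grad f x \<bullet> (y - x) = (f y - f (x + b *\<^sub>R e2) - a * pd 1 f x) + (f (x + b *\<^sub>R e2) - f x - pd 2 f x * b)"
        unfolding gi by (simp add: algebra_simps)
      show ?thesis unfolding eq
        using A B abs_triangle_ineq[of "f y - f (x + b *\<^sub>R e2) - a * pd 1 f x" "f (x + b *\<^sub>R e2) - f x - pd 2 f x * b"]
        by linarith
    qed
    also have "\<dots> \<le> e * norm (y - x)"
    proof -
      have "e/2*\<bar>a\<bar> \<le> e/2*norm h" using ha e by (intro mult_left_mono) auto
      moreover have "e/2*\<bar>b\<bar> \<le> e/2*norm h" using hb e by (intro mult_left_mono) auto
      ultimately show ?thesis unfolding h_def by linarith
    qed
    finally show "norm (f y - f x - grad f x \<bullet> (y - x)) \<le> e * norm (y - x)" by simp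
  qed
qed

lemma second_deriv_max:
  fixes F F' :: "real \<Rightarrow> real"
  assumes r: "r > 0" and dF: "\<And>s. \<bar>s\<bar> < r \<Longrightarrow> (F has_real_derivative F' s) (at s)"
    and dF': "(F' has_real_derivative D) (at 0)" and mx: "\<And>s. \<bar>s\<bar> < r \<Longrightarrow> F s \<le> F 0"
  shows "D \<le> 0"
proof (rule ccontr)
  assume "\<not> D \<le> 0" hence D: "D > 0" by simp
  have "F' 0 = 0" using DERIV_local_max[OF dF[of 0] r] mx r by simp
  obtain d where d: "d > 0" "\<forall>h>0. h < d \<longrightarrow> F' 0 < F' (0 + h)"
    using DERIV_pos_inc_right[OF dF' D] by blast
  define b where "b = min d r / 2"
  have b: "0 < b" "b < d" "b < r" using d r by (auto simp: b_def)
  have "F 0 < F b"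
  proof (rule DERIV_pos_imp_increasing_open[OF b(1)])
    fix x assume x: "0 < x" "x < b"
    show "\<exists>y. DERIV F x :> y \<and> 0 < y"
      using dF[of x] d \<open>F' 0 = 0\<close> x b by (intro exI[of _ "F' x"]) auto
  next
    show "continuous_on {0..b} F"
      using b by (intro continuous_at_imp_continuous_on ballI DERIV_isCont[OF dF]) auto
  qed
  moreover have "F b \<le> F 0" using mx b by simp
  ultimately show False by simp
qed

lemma dir_deriv:
  fixes f :: "real^2 \<Rightarrow> real"
  assumes "(f has_derivative (\<lambda>v. g \<bullet> v)) (at (x - h *\<^sub>R n))"
  shows "((\<lambda>s. f (x - s *\<^sub>R n)) has_real_derivative (- (g \<bullet> n))) (at h)"
proof -
  have l: "((\<lambda>s. x - s *\<^sub>R n) has_derivative (\<lambda>k. - (k *\<^sub>R n))) (at h)"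
    by (auto intro!: derivative_eq_intros)
  have "((\<lambda>s. f (x - s *\<^sub>R n)) has_derivative (\<lambda>k. g \<bullet> (- (k *\<^sub>R n)))) (at h)"
    by (rule has_derivative_compose[OF l assms])
  then show ?thesis unfolding has_field_derivative_def
    by (rule has_derivative_eq_rhs) (auto simp: fun_eq_iff)
qed

lemma bnd_compact:
  fixes f :: "'a::metric_space \<Rightarrow> real"
  assumes "compact S" "continuous_on S f"
  shows "\<exists>B\<ge>0. \<forall>x\<in>S. \<bar>f x\<bar> \<le> B"
proof -
  have "bounded (f ` S)" using assms compact_continuous_image compact_imp_bounded by blast
  then obtain B where "\<forall>y\<in>f ` S. norm y \<le> B" unfolding bounded_iff by blast
  then show ?thesis by (intro exI[of _ "max B 0"]) auto
qed

lemma smooth_C2: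
  assumes "smooth \<phi>"
  shows "continuous_on UNIV \<phi>" "\<forall>i x. has_pd i \<phi> x" "\<forall>i. continuous_on UNIV (pd i \<phi>)"
    "\<forall>i j x. has_pd j (pd i \<phi>) x" "\<forall>i j. continuous_on UNIV (pd j (pd i \<phi>))"
proof -
  have "Ck (Suc (Suc 0)) \<phi>" using assms unfolding smooth_def by blast
  then show "continuous_on UNIV \<phi>" "\<forall>i x. has_pd i \<phi> x" "\<forall>i. continuous_on UNIV (pd i \<phi>)"
    "\<forall>i j x. has_pd j (pd i \<phi>) x" "\<forall>i j. continuous_on UNIV (pd j (pd i \<phi>))"
    by auto
qed

lemma lap2: "lap f x = pd 1 (pd 1 f) x + pd 2 (pd 2 f) x"
  by (simp add: lap_def sum_2)

lemma C21_facts: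
  assumes "C21 \<Omega> T u"
  shows "continuous_on (closure \<Omega> \<times> tint0 T) (\<lambda>(x,t). u x t)"
    "\<And>x t. x \<in> \<Omega> \<Longrightarrow> t \<in> tint T \<Longrightarrow> (\<lambda>s. u x s) differentiable (at t)"
    "\<And>x t i. x \<in> \<Omega> \<Longrightarrow> t \<in> tint T \<Longrightarrow> has_pd i (\<lambda>y. u y t) x"
    "\<And>x t i j. x \<in> \<Omega> \<Longrightarrow> t \<in> tint T \<Longrightarrow> has_pd j (pd i (\<lambda>y. u y t)) x"
    "\<And>i. continuous_on (\<Omega> \<times> tint T) (\<lambda>(x,t). pd i (\<lambda>y. u y t) x)"
  using assms unfolding C21_def cont_ext_def by blast+

lemma aux1: "(A::real) \<le> (u - M)/2 \<Longrightarrow> \<not> u \<le> M \<Longrightarrow> 0 \<le> u - M - A" by simp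

lemma comparison:
  fixes \<Omega> :: "(real^2) set" and \<phi> :: "real^2 \<Rightarrow> real" and T :: ereal
    and u :: "real^2 \<Rightarrow> real \<Rightarrow> real" and d M :: real
  assumes dom: "smooth_bounded_domain \<Omega> \<phi>" and C: "C21 \<Omega> T u"
    and neu: "\<forall>x\<in>frontier \<Omega>. \<forall>t\<in>tint T.
        ((\<lambda>(y,s). grad (\<lambda>z. u z s) y \<bullet> normal \<phi> x) \<longlongrightarrow> 0) (at (x,t) within \<Omega> \<times> tint T)"
    and dpos: "d > 0"
    and ineq: "\<forall>x\<in>\<Omega>. \<forall>t\<in>tint T. M \<le> u x t \<longrightarrow> deriv (\<lambda>s. u x s) t \<le> d * lap (\<lambda>y. u y t) x"
    and init: "\<forall>x\<in>closure \<Omega>. u x 0 \<le> M"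
  shows "\<forall>x\<in>\<Omega>. \<forall>t\<in>tint T. u x t \<le> M"
proof (intro ballI, rule ccontr)
  fix x0 t0 assume x0: "x0 \<in> \<Omega>" and t0: "t0 \<in> tint T" and nle: "\<not> u x0 t0 \<le> M"
  have opn: "open \<Omega>" and bdd: "bounded \<Omega>" and sm: "smooth \<phi>"
    and Oeq: "\<Omega> = {x. \<phi> x < 0}" and Feq: "frontier \<Omega> = {x. \<phi> x = 0}"
    and gnz: "\<forall>x\<in>frontier \<Omega>. grad \<phi> x \<noteq> 0"
    using dom unfolding smooth_bounded_domain_def by auto
  note \<phi>C = smooth_C2[OF sm]
  note CF = C21_facts[OF C]
  have cpt: "compact (closure \<Omega>)" using bdd compact_closure by blast
  have t0p: "0 < t0" "ereal t0 < T" using t0 unfolding tint_def by auto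
  obtain c\<phi> where c\<phi>: "c\<phi> \<ge> 0" "\<forall>x\<in>closure \<Omega>. \<bar>\<phi> x\<bar> \<le> c\<phi>"
    using bnd_compact[OF cpt continuous_on_subset[OF \<phi>C(1)]] by blast
  have "continuous_on UNIV (lap \<phi>)"
    unfolding lap2 using \<phi>C(5) by (intro continuous_intros) auto
  then obtain L where L: "L \<ge> 0" "\<forall>x\<in>closure \<Omega>. \<bar>lap \<phi> x\<bar> \<le> L"
    using bnd_compact[OF cpt continuous_on_subset] by blast
  define K where "K = d * L + 1"
  have K: "K > 0" using dpos L(1) unfolding K_def by (smt (verit) mult_nonneg_nonneg)
  define \<epsilon> where "\<epsilon> = (u x0 t0 - M) / (2 * (2 * c\<phi> + 1 + K * t0))"
  have den: "2 * c\<phi> + 1 + K * t0 > 0" using c\<phi> K t0p by (simp add: add_pos_nonneg)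
  have \<epsilon>: "\<epsilon> > 0" using nle den by (simp add: \<epsilon>_def)
  define z where "z y t = u y t - M - \<epsilon> * (\<phi> y + c\<phi> + 1 + K * t)" for y t
  have x0c: "x0 \<in> closure \<Omega>" using x0 closure_subset by blast
  have z0: "z x0 t0 \<ge> 0"
  proof -
    have "\<phi> x0 \<le> c\<phi>" using c\<phi> x0c by force
    then have "\<epsilon> * (\<phi> x0 + c\<phi> + 1 + K * t0) \<le> \<epsilon> * (2 * c\<phi> + 1 + K * t0)"
      using \<epsilon> by (intro mult_left_mono) auto
    also have "\<dots> = (u x0 t0 - M) / 2" using den by (simp add: \<epsilon>_def field_simps)
    finally show ?thesis using nle unfolding z_def by (rule aux1)
  qed
  define A where "A = closure \<Omega> \<times> {0..t0}"
  have AT: "A \<subseteq> closure \<Omega> \<times> tint0 T"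
    using t0p unfolding A_def tint0_def by auto (meson ereal_less_eq(3) order.strict_trans1)
  have cA: "compact A" unfolding A_def using cpt by (intro compact_Times) auto
  have contz: "continuous_on A (\<lambda>p. z (fst p) (snd p))"
  proof -
    have "continuous_on A (\<lambda>p. u (fst p) (snd p))"
      using continuous_on_subset[OF CF(1) AT] by (simp add: split_beta)
    moreover have "continuous_on A (\<lambda>p. \<phi> (fst p))"
      by (rule continuous_on_compose2[OF \<phi>C(1)]) (auto intro: continuous_intros)
    ultimately show ?thesis unfolding z_def by (intro continuous_intros) auto
  qed
  define Sset where "Sset = A \<inter> (\<lambda>p. z (fst p) (snd p)) -` {0..}"
  have "closed Sset" unfolding Sset_def
    by (rule continuous_closed_preimage[OF contz compact_imp_closed[OF cA] closed_atLeast])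
  moreover have "A \<inter> Sset = Sset" unfolding Sset_def by blast
  ultimately have cS: "compact Sset" using compact_Int_closed[OF cA] by metis
  have x0S: "(x0, t0) \<in> Sset" using z0 x0c t0p unfolding Sset_def A_def by auto
  obtain p where pS: "p \<in> Sset" and pmin: "\<forall>q\<in>Sset. snd p \<le> snd q"
    using continuous_attains_inf[OF cS _ continuous_on_snd[OF continuous_on_id]] x0S by blast
  define xs where "xs = fst p"
  define ts where "ts = snd p"
  have xsc: "xs \<in> closure \<Omega>" and ts: "0 \<le> ts" "ts \<le> t0" and zs: "z xs ts \<ge> 0"
    using pS unfolding Sset_def A_def xs_def ts_def by auto
  have before: "z y s < 0" if "y \<in> closure \<Omega>" "0 \<le> s" "s < ts" for y s
  proof (rule ccontr)
    assume "\<not> z y s < 0"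
    then have "(y, s) \<in> Sset" using that ts unfolding Sset_def A_def by auto
    then show False using pmin that unfolding ts_def by force
  qed
  have tsp: "ts > 0"
  proof (rule ccontr)
    assume "\<not> ts > 0" then have "ts = 0" using ts by simp
    have "\<phi> xs \<ge> - c\<phi>" using c\<phi> xsc by force
    then have "z xs 0 < 0" using init xsc \<epsilon> unfolding z_def
      by (smt (verit) mult_pos_pos)
    then show False using zs \<open>ts = 0\<close> by simp
  qed
  have tsT: "ts \<in> tint T" using tsp ts t0p unfolding tint_def
    by auto (meson ereal_less_eq(3) order.strict_trans1)
  have atts: "z y ts \<le> 0" if y: "y \<in> closure \<Omega>" for y
  proof (rule ccontr)
    assume pos: "\<not> z y ts \<le> 0"
    have "continuous_on {0..t0} (\<lambda>s. z y s)"
      by (rule continuous_on_compose2[OF contz, of _ "\<lambda>s. (y, s)", simplified])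
        (auto intro: continuous_intros simp: A_def y)
    then obtain e where e: "e > 0" "\<forall>s\<in>{0..t0}. dist s ts < e \<longrightarrow> dist (z y s) (z y ts) < z y ts"
      using pos ts unfolding continuous_on_iff by (metis atLeastAtMost_iff not_le)
    define s where "s = max 0 (ts - e/2)"
    have "s \<in> {0..t0}" "dist s ts < e" "s < ts" using e ts tsp by (auto simp: s_def dist_real_def)
    then have "\<bar>z y s - z y ts\<bar> < z y ts" using e by (auto simp: dist_real_def)
    then have "z y s > 0" by linarith
    moreover have "z y s < 0" using before[OF y _ \<open>s < ts\<close>] by (simp add: s_def)
    ultimately show False by simp
  qed
  have closure_eq: "closure \<Omega> = \<Omega> \<union> frontier \<Omega>" by (simp add: closure_Un_frontier)
  show False
  proof (cases "xs \<in> \<Omega>")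
    case True
    obtain r where r: "r > 0" "ball xs r \<subseteq> \<Omega>" using opn True openE by blast
    have inb: "xs + s *\<^sub>R axis i 1 \<in> \<Omega>" if "\<bar>s\<bar> < r" for s i
      using r that by (auto simp: dist_norm intro!: subsetD[OF r(2)])
    have second: "pd i (pd i (\<lambda>y. u y ts)) xs - \<epsilon> * pd i (pd i \<phi>) xs \<le> 0" for i
    proof (rule second_deriv_max[OF r(1)])
      fix s :: real assume s: "\<bar>s\<bar> < r"
      have h1: "has_pd i (\<lambda>y. u y ts) (xs + s *\<^sub>R axis i 1)" using CF(3)[OF inb[OF s] tsT] .
      show "((\<lambda>s. u (xs + s *\<^sub>R axis i 1) ts - \<epsilon> * \<phi> (xs + s *\<^sub>R axis i 1)) has_real_derivative
          (\<lambda>s. pd i (\<lambda>y. u y ts) (xs + s *\<^sub>R axis i 1) - \<epsilon> * pd i \<phi> (xs + s *\<^sub>R axis i 1)) s) (at s)"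
        using pd_deriv_shift[OF h1] pd_deriv_shift[of i \<phi> xs s] \<phi>C(2)
        by (auto intro!: derivative_eq_intros)
    next
      show "((\<lambda>s. pd i (\<lambda>y. u y ts) (xs + s *\<^sub>R axis i 1) - \<epsilon> * pd i \<phi> (xs + s *\<^sub>R axis i 1))
          has_real_derivative pd i (pd i (\<lambda>y. u y ts)) xs - \<epsilon> * pd i (pd i \<phi>) xs) (at 0)"
        using pd_deriv[OF CF(4)[OF True tsT]] pd_deriv[of i "pd i \<phi>" xs] \<phi>C(4)
        by (auto intro!: derivative_eq_intros)
    next
      fix s :: real assume s: "\<bar>s\<bar> < r"
      have "z (xs + s *\<^sub>R axis i 1) ts \<le> z xs ts"
        using atts[of "xs + s *\<^sub>R axis i 1"] inb[OF s] zs closure_subset by fastforce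
      then show "u (xs + s *\<^sub>R axis i 1) ts - \<epsilon> * \<phi> (xs + s *\<^sub>R axis i 1)
          \<le> u (xs + 0 *\<^sub>R axis i 1) ts - \<epsilon> * \<phi> (xs + 0 *\<^sub>R axis i 1)"
        unfolding z_def by (simp add: algebra_simps)
    qed
    have "lap (\<lambda>y. u y ts) xs \<le> \<epsilon> * lap \<phi> xs"
      using second[of 1] second[of 2] unfolding lap2 by (simp add: algebra_simps)
    also have "\<dots> \<le> \<epsilon> * L" using L xsc \<epsilon> by (intro mult_left_mono) force+
    finally have lapb: "d * lap (\<lambda>y. u y ts) xs \<le> d * (\<epsilon> * L)" using dpos by simp
    define Dt where "Dt = deriv (\<lambda>s. u xs s) ts"
    have "((\<lambda>s. u xs s) has_real_derivative Dt) (at ts)"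
      using CF(2)[OF True tsT] unfolding Dt_def by (simp add: DERIV_deriv_iff_real_differentiable)
    then have dz: "((\<lambda>s. z xs s) has_real_derivative Dt - \<epsilon> * K) (at ts)"
      unfolding z_def by (auto intro!: derivative_eq_intros)
    have Dt: "Dt - \<epsilon> * K \<ge> 0"
    proof (rule ccontr)
      assume "\<not> Dt - \<epsilon> * K \<ge> 0"
      then obtain e where e: "e > 0" "\<forall>h>0. h < e \<longrightarrow> z xs ts < z xs (ts - h)"
        using DERIV_neg_dec_left[OF dz] by auto
      define h where "h = min e ts / 2"
      have "z xs ts < z xs (ts - h)" using e tsp by (auto simp: h_def)
      moreover have "z xs (ts - h) < 0" using before[OF xsc] e tsp by (auto simp: h_def)
      ultimately show False using zs by simp
    qed
    have "M \<le> u xs ts"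
    proof -
      have "\<phi> xs \<ge> - c\<phi>" using c\<phi> xsc by force
      then have "0 \<le> \<epsilon> * (\<phi> xs + c\<phi> + 1 + K * ts)" using \<epsilon> K ts by (intro mult_nonneg_nonneg) auto
      then show ?thesis using zs unfolding z_def by linarith
    qed
    then have "Dt \<le> d * lap (\<lambda>y. u y ts) xs" using ineq True tsT unfolding Dt_def by blast
    then have "\<epsilon> * K \<le> d * (\<epsilon> * L)" using Dt lapb by linarith
    then show False using \<epsilon> unfolding K_def by (simp add: algebra_simps)
  next
    case False
    then have xsF: "xs \<in> frontier \<Omega>" using xsc closure_eq by blast
    have \<phi>0: "\<phi> xs = 0" using xsF Feq by blast
    define g\<phi> where "g\<phi> = grad \<phi> xs"
    have gnz': "g\<phi> \<noteq> 0" using gnz xsF unfolding g\<phi>_def by blast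
    define n where "n = normal \<phi> xs"
    have n_eq: "n = g\<phi> /\<^sub>R norm g\<phi>" unfolding n_def normal_def g\<phi>_def ..
    have gn: "g\<phi> \<bullet> n = norm g\<phi>" using gnz' unfolding n_eq
      by (simp add: inner_commute power2_norm_eq_inner[symmetric] power2_eq_square)
    have gnpos: "norm g\<phi> > 0" using gnz' by simp
    have D\<phi>: "(\<phi> has_derivative (\<lambda>h. grad \<phi> y \<bullet> h)) (at y)" for y
      using C1_has_derivative[of UNIV y \<phi>, OF open_UNIV UNIV_I] \<phi>C(2,3) by blast
    have der\<phi>: "((\<lambda>s. \<phi> (xs - s *\<^sub>R n)) has_real_derivative - (g\<phi> \<bullet> n)) (at 0)"
      using dir_deriv[of \<phi> g\<phi> xs 0 n] D\<phi>[of xs] unfolding g\<phi>_def by simp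
    have neg: "- (g\<phi> \<bullet> n) < 0" using gn gnpos by simp
    obtain d1 where d1: "d1 > 0" "\<forall>h>0. h < d1 \<longrightarrow> \<phi> (xs - 0 *\<^sub>R n) > \<phi> (xs - (0 + h) *\<^sub>R n)"
      using DERIV_neg_dec_right[OF der\<phi> neg] by blast
    have inO: "xs - h *\<^sub>R n \<in> \<Omega>" if "0 < h" "h < d1" for h
    proof -
      have "\<phi> (xs - h *\<^sub>R n) < 0" using d1(2) that \<phi>0 by simp
      then show ?thesis using Oeq by blast
    qed
    have lim_u: "((\<lambda>h. grad (\<lambda>y. u y ts) (xs - h *\<^sub>R n) \<bullet> n) \<longlongrightarrow> 0) (at_right 0)"
    proof -
      have L0: "((\<lambda>(y,s). grad (\<lambda>z. u z s) y \<bullet> n) \<longlongrightarrow> 0) (at (xs,ts) within \<Omega> \<times> tint T)"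
        using neu xsF tsT unfolding n_def by blast
      have F: "filterlim (\<lambda>h. (xs - h *\<^sub>R n, ts)) (at (xs,ts) within \<Omega> \<times> tint T) (at_right 0)"
        unfolding filterlim_at
      proof
        show "\<forall>\<^sub>F h in at_right 0. (xs - h *\<^sub>R n, ts) \<in> \<Omega> \<times> tint T \<and> (xs - h *\<^sub>R n, ts) \<noteq> (xs, ts)"
          unfolding eventually_at_right_field using d1 inO tsT False
          by (intro exI[of _ d1]) auto
        have "((\<lambda>h. (xs - h *\<^sub>R n, ts)) \<longlongrightarrow> (xs - 0 *\<^sub>R n, ts)) (at_right 0)"
          by (intro tendsto_intros)
        then show "((\<lambda>h. (xs - h *\<^sub>R n, ts)) \<longlongrightarrow> (xs, ts)) (at_right 0)" by simp
      qed
      show ?thesis using filterlim_compose[OF L0 F] by (simp add: o_def)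
    qed
    have lim_\<phi>: "((\<lambda>h. grad \<phi> (xs - h *\<^sub>R n) \<bullet> n) \<longlongrightarrow> norm g\<phi>) (at_right 0)"
    proof -
      have ic: "isCont (pd i \<phi>) y" for i y using \<phi>C(3) continuous_on_eq_continuous_at by blast
      have "isCont (\<lambda>h. pd 1 \<phi> (xs - h *\<^sub>R n) * n$1 + pd 2 \<phi> (xs - h *\<^sub>R n) * n$2) 0"
      proof -
        have icc: "isCont (\<lambda>h. pd i \<phi> (xs - h *\<^sub>R n)) 0" for i
        proof -
          have "isCont (\<lambda>h. xs - h *\<^sub>R n) 0" by (intro continuous_intros)
          then show ?thesis using isCont_o2 ic by blast
        qed
        show ?thesis by (intro continuous_intros icc)
      qed
      then have "((\<lambda>h. grad \<phi> (xs - h *\<^sub>R n) \<bullet> n) \<longlongrightarrow> grad \<phi> (xs - 0 *\<^sub>R n) \<bullet> n) (at 0)"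
        unfolding grad_inner isCont_def by simp
      then show ?thesis using gn unfolding g\<phi>_def
        by (auto intro: tendsto_within_subset)
    qed
    define G' where "G' h = - (grad (\<lambda>y. u y ts) (xs - h *\<^sub>R n) \<bullet> n) + \<epsilon> * (grad \<phi> (xs - h *\<^sub>R n) \<bullet> n)" for h
    have Glim: "(G' \<longlongrightarrow> - 0 + \<epsilon> * norm g\<phi>) (at_right 0)"
      unfolding G'_def by (intro tendsto_intros lim_u lim_\<phi>)
    have "\<forall>\<^sub>F h in at_right 0. G' h > 0"
      using order_tendstoD(1)[OF Glim, of 0] \<epsilon> gnpos by simp
    then obtain b where b: "b > 0" "\<forall>h>0. h < b \<longrightarrow> G' h > 0"
      unfolding eventually_at_right_field by auto
    define c where "c = min b d1 / 2"
    have c: "0 < c" "c < b" "c < d1" using b d1 by (auto simp: c_def)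
    have contuO: "continuous_on \<Omega> (pd i (\<lambda>y. u y ts))" for i
      by (rule continuous_on_compose2[OF CF(5)[of i], of _ "\<lambda>y. (y, ts)", simplified])
        (auto intro: continuous_intros simp: tsT)
    have Du: "((\<lambda>y. u y ts) has_derivative (\<lambda>v. grad (\<lambda>y. u y ts) y \<bullet> v)) (at y)" if "y \<in> \<Omega>" for y
      using C1_has_derivative[OF opn that] CF(3)[OF _ tsT] contuO by blast
    have "z xs ts < z (xs - c *\<^sub>R n) ts"
    proof -
      have "(\<lambda>h. z (xs - h *\<^sub>R n) ts) 0 < (\<lambda>h. z (xs - h *\<^sub>R n) ts) c"
      proof (rule DERIV_pos_imp_increasing_open[OF c(1)])
        fix h assume h: "0 < h" "h < c"
        have yO: "xs - h *\<^sub>R n \<in> \<Omega>" using inO h c by auto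
        have e1: "((\<lambda>h. u (xs - h *\<^sub>R n) ts) has_real_derivative - (grad (\<lambda>y. u y ts) (xs - h *\<^sub>R n) \<bullet> n)) (at h)"
          by (rule dir_deriv[OF Du[OF yO]])
        have e2: "((\<lambda>h. \<phi> (xs - h *\<^sub>R n)) has_real_derivative - (grad \<phi> (xs - h *\<^sub>R n) \<bullet> n)) (at h)"
          by (rule dir_deriv[OF D\<phi>])
        have "((\<lambda>h. u (xs - h *\<^sub>R n) ts - M - \<epsilon> * (\<phi> (xs - h *\<^sub>R n) + c\<phi> + 1 + K * ts)) has_real_derivative
            - (grad (\<lambda>y. u y ts) (xs - h *\<^sub>R n) \<bullet> n) - 0 - \<epsilon> * (- (grad \<phi> (xs - h *\<^sub>R n) \<bullet> n) + 0 + 0 + 0)) (at h)"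
          by (intro DERIV_diff DERIV_cmult DERIV_add e1 e2 DERIV_const)
        then have "((\<lambda>h. z (xs - h *\<^sub>R n) ts) has_real_derivative G' h) (at h)"
          unfolding z_def G'_def by simp
        then show "\<exists>y. ((\<lambda>h. z (xs - h *\<^sub>R n) ts) has_real_derivative y) (at h) \<and> 0 < y"
          using b h c by (intro exI[of _ "G' h"]) auto
      next
        show "continuous_on {0..c} (\<lambda>h. z (xs - h *\<^sub>R n) ts)"
        proof (rule continuous_on_compose2[OF contz, of _ "\<lambda>h. (xs - h *\<^sub>R n, ts)", simplified])
          show "continuous_on {0..c} (\<lambda>h. (xs - h *\<^sub>R n, ts))" by (intro continuous_intros)
          show "(\<lambda>h. (xs - h *\<^sub>R n, ts)) ` {0..c} \<subseteq> A"
          proof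
            fix q assume "q \<in> (\<lambda>h. (xs - h *\<^sub>R n, ts)) ` {0..c}"
            then obtain h where h: "h \<in> {0..c}" "q = (xs - h *\<^sub>R n, ts)" by blast
            have "xs - h *\<^sub>R n \<in> closure \<Omega>"
            proof (cases "h = 0")
              case True then show ?thesis using xsc by simp
            next
              case False
              then have "0 < h" "h < d1" using h c by auto
              then show ?thesis using inO closure_subset by blast
            qed
            then show "q \<in> A" using h ts unfolding A_def by auto
          qed
        qed
      qed
      then show ?thesis by simp
    qed
    moreover have "z (xs - c *\<^sub>R n) ts \<le> 0" using atts inO c closure_subset by blast
    ultimately show False using zs by simp
  qed
qed

theorem lemma3p1:
  fixes \<Omega> :: "(real^2) set" and \<phi> :: "real^2 \<Rightarrow> real"
    and d lam mu a b :: "nat \<Rightarrow> real" and chi :: real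
    and u0 v0 w0 :: "real^2 \<Rightarrow> real" and Tmax :: ereal
    and u v w :: "real^2 \<Rightarrow> real \<Rightarrow> real"
  assumes dom: "smooth_bounded_domain \<Omega> \<phi>"
    and pos: "\<forall>i\<in>{1,2,3}. d i > 0 \<and> lam i > 0 \<and> mu i > 0 \<and> a i > 0 \<and> b i > 0" "chi > 0"
    and u0: "\<exists>\<theta>>2. W1 \<Omega> \<theta> u0" "AE x in lborel. x \<in> \<Omega> \<longrightarrow> 0 \<le> u0 x"
    and v0: "\<exists>\<theta>>2. W1 \<Omega> \<theta> v0" "AE x in lborel. x \<in> \<Omega> \<longrightarrow> 0 \<le> v0 x"
    and w0: "continuous_on (closure \<Omega>) w0" "\<forall>x\<in>closure \<Omega>. 0 \<le> w0 x"
    and sol: "maximal_solution \<Omega> \<phi> d chi lam mu a b u0 v0 w0 Tmax u v w"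
    and nonneg: "\<forall>x\<in>closure \<Omega>. \<forall>t\<in>tint0 Tmax. 0 \<le> u x t \<and> 0 \<le> v x t \<and> 0 \<le> w x t"
  shows "\<exists>C>0. \<forall>x\<in>\<Omega>. \<forall>t\<in>tint Tmax. \<bar>u x t\<bar> \<le> C \<and> \<bar>v x t\<bar> \<le> C"
proof -
  have cs: "classical_solution \<Omega> \<phi> d chi lam mu a b u0 v0 w0 Tmax u v w"
    using sol unfolding maximal_solution_def by blast
  have T0: "0 < Tmax" and Cu: "C21 \<Omega> Tmax u" and Cv: "C21 \<Omega> Tmax v"
    using cs unfolding classical_solution_def by auto
  have pde: "\<forall>x\<in>\<Omega>. \<forall>t\<in>tint Tmax.
        deriv (\<lambda>s. u x s) t = d 1 * lap (\<lambda>y. u y t) x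
           + u x t * (lam 1 - mu 1 * u x t - a 1 * v x t - a 2 * w x t) \<and>
        deriv (\<lambda>s. v x s) t = d 2 * lap (\<lambda>y. v y t) x
           + v x t * (lam 2 - mu 2 * v x t + b 1 * u x t - a 3 * w x t)"
    using cs unfolding classical_solution_def by blast
  have neu_u: "\<forall>x\<in>frontier \<Omega>. \<forall>t\<in>tint Tmax.
        ((\<lambda>(y,s). grad (\<lambda>z. u z s) y \<bullet> normal \<phi> x) \<longlongrightarrow> 0) (at (x,t) within \<Omega> \<times> tint Tmax)"
    using cs unfolding classical_solution_def by blast
  have neu_v: "\<forall>x\<in>frontier \<Omega>. \<forall>t\<in>tint Tmax.
        ((\<lambda>(y,s). grad (\<lambda>z. v z s) y \<bullet> normal \<phi> x) \<longlongrightarrow> 0) (at (x,t) within \<Omega> \<times> tint Tmax)"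
    using cs unfolding classical_solution_def by blast
  have p1: "d 1 > 0" "lam 1 > 0" "mu 1 > 0" "a 1 > 0" "b 1 > 0" using pos(1) by auto
  have p2: "d 2 > 0" "lam 2 > 0" "mu 2 > 0" "a 2 > 0" "b 2 > 0" using pos(1) by auto
  have p3: "a 3 > 0" using pos(1) by auto
  have bdd: "bounded \<Omega>" using dom unfolding smooth_bounded_domain_def by auto
  have cpt: "compact (closure \<Omega>)" using bdd compact_closure by blast
  have sub: "closure \<Omega> \<subseteq> closure \<Omega>" by simp
  have nn: "0 \<le> u x t" "0 \<le> v x t" "0 \<le> w x t" if "x \<in> \<Omega>" "t \<in> tint Tmax" for x t
    using nonneg that closure_subset unfolding tint_def tint0_def by force+
  have init_cont: "continuous_on (closure \<Omega>) (\<lambda>x. f x 0)" if "C21 \<Omega> Tmax f" for f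
  proof -
    have z: "0 \<in> tint0 Tmax" using T0 unfolding tint0_def by (simp add: zero_ereal_def)
    show ?thesis
      by (rule continuous_on_compose2[OF C21_facts(1)[OF that], of _ "\<lambda>x. (x, 0)", simplified])
        (auto intro: continuous_intros simp: z)
  qed
  obtain B1 where B1: "B1 \<ge> 0" "\<forall>x\<in>closure \<Omega>. \<bar>u x 0\<bar> \<le> B1"
    using bnd_compact[OF cpt init_cont[OF Cu]] by blast
  obtain B2 where B2: "B2 \<ge> 0" "\<forall>x\<in>closure \<Omega>. \<bar>v x 0\<bar> \<le> B2"
    using bnd_compact[OF cpt init_cont[OF Cv]] by blast
  define M1 where "M1 = max B1 (lam 1 / mu 1)"
  define M2 where "M2 = max B2 ((lam 2 + b 1 * M1) / mu 2)"
  have ubd: "\<forall>x\<in>\<Omega>. \<forall>t\<in>tint Tmax. u x t \<le> M1"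
  proof (rule comparison[OF dom Cu neu_u p1(1)])
    show "\<forall>x\<in>closure \<Omega>. u x 0 \<le> M1" using B1 unfolding M1_def by force
    show "\<forall>x\<in>\<Omega>. \<forall>t\<in>tint Tmax. M1 \<le> u x t \<longrightarrow> deriv (\<lambda>s. u x s) t \<le> d 1 * lap (\<lambda>y. u y t) x"
    proof (intro ballI impI)
      fix x t assume x: "x \<in> \<Omega>" and t: "t \<in> tint Tmax" and M: "M1 \<le> u x t"
      have "lam 1 / mu 1 \<le> u x t" using M unfolding M1_def by simp
      then have "lam 1 \<le> mu 1 * u x t" using p1 by (simp add: field_simps)
      moreover have "0 \<le> a 1 * v x t" "0 \<le> a 2 * w x t" using p1 p2 nn[OF x t] by simp_all
      ultimately have "lam 1 - mu 1 * u x t - a 1 * v x t - a 2 * w x t \<le> 0" by linarith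
      then have "u x t * (lam 1 - mu 1 * u x t - a 1 * v x t - a 2 * w x t) \<le> 0"
        using nn[OF x t] by (simp add: mult_nonneg_nonpos)
      then show "deriv (\<lambda>s. u x s) t \<le> d 1 * lap (\<lambda>y. u y t) x" using pde x t by fastforce
    qed
  qed
  have vbd: "\<forall>x\<in>\<Omega>. \<forall>t\<in>tint Tmax. v x t \<le> M2"
  proof (rule comparison[OF dom Cv neu_v p2(1)])
    show "\<forall>x\<in>closure \<Omega>. v x 0 \<le> M2" using B2 unfolding M2_def by force
    show "\<forall>x\<in>\<Omega>. \<forall>t\<in>tint Tmax. M2 \<le> v x t \<longrightarrow> deriv (\<lambda>s. v x s) t \<le> d 2 * lap (\<lambda>y. v y t) x"
    proof (intro ballI impI)
      fix x t assume x: "x \<in> \<Omega>" and t: "t \<in> tint Tmax" and M: "M2 \<le> v x t"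
      have "(lam 2 + b 1 * M1) / mu 2 \<le> v x t" using M unfolding M2_def by simp
      then have "lam 2 + b 1 * M1 \<le> mu 2 * v x t" using p2 by (simp add: field_simps)
      moreover have "b 1 * u x t \<le> b 1 * M1" using ubd x t p1 by (simp add: mult_left_mono)
      moreover have "0 \<le> a 3 * w x t" using p3 nn[OF x t] by simp
      ultimately have "lam 2 - mu 2 * v x t + b 1 * u x t - a 3 * w x t \<le> 0" by linarith
      then have "v x t * (lam 2 - mu 2 * v x t + b 1 * u x t - a 3 * w x t) \<le> 0"
        using nn[OF x t] by (simp add: mult_nonneg_nonpos)
      then show "deriv (\<lambda>s. v x s) t \<le> d 2 * lap (\<lambda>y. v y t) x" using pde x t by fastforce
    qed
  qed
  show ?thesis
  proof (intro exI[of _ "max (max M1 M2) 1"] conjI ballI)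
    show "0 < max (max M1 M2) 1" by simp
    fix x t assume x: "x \<in> \<Omega>" and t: "t \<in> tint Tmax"
    show "\<bar>u x t\<bar> \<le> max (max M1 M2) 1" using ubd nn[OF x t] x t by fastforce
    show "\<bar>v x t\<bar> \<le> max (max M1 M2) 1" using vbd nn[OF x t] x t by fastforce
  qed
qed

end
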